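(* Let $m\ge3$, $C$ a set of $m$ candidates, $T$ the set of all $m!$ strict rankings of $C$, $w=(w_1,\dots,w_m)$ with $1=w_1\ge\cdots\ge w_m=0$, $\bar w=(w_1+\cdots+w_m)/m$, and $\sigma_t(\alpha)=w_i$ where $i$ is the position of $\alpha$ in $t\in T$. Let $(N_t)_{t\in T}$ be nonnegative integers with $\sum_tN_t=n$ and $|\alpha|=\sum_tN_t\sigma_t(\alpha)$. Suppose $|a|>|\alpha|$ for all $\alpha\ne a$, and $b\ne a$ satisfies $|b|\ge|\alpha|$ for all $\alpha\ne a$. Let $T_b$ be the set of types ranking $b$ first, $T_i$ ($1\le i\le m-1$) the set of types ranking $b$ in position $i$ and $a$ in position $i+1$, and $T_{ba}=\bigcup_iT_i$. Then the linear program $$\min\sum_{t\in T_{ba}}x_t\ \text{ s.t. }\ \sum_{t\in T_b}y_t(1-\sigma_t(\alpha))-\sum_{t\in T_{ba}}x_t(\sigma_t(b)-\sigma_t(\alpha))\ge|\alpha|-|b|\ \forall\alpha\ne b,\quad \sum_{t\in T_b}y_t=\sum_{t\in T_{ba}}x_t,\quad x_t\ge0,\ y_t\ge0$$ has the same optimal value (with the value $+\infty$ for an infeasible program) as the linear program $$\min\sum_{i=1}^{m-1}z_i\ \text{ s.t. }\ \sum_{i=1}^{m-1}(1-w_i+w_{i+1})z_i\ge|a|-|b|,\quad \sum_{i=1}^{m-1}(1-w_i)z_i\ge n\bar w-|b|,\quad z_i\ge0\ (i=1,\dots,m-1).$$ *)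

theory Defs
  imports "HOL-Analysis.Analysis" "HOL-Combinatorics.Multiset_Permutations"
begin

text \<open>A strict ranking (type) of the candidate set C is a list enumerating C without
  repetition; the candidate at list index 0 is ranked first (position 1).\<close>

definition rankings :: "'c set \<Rightarrow> 'c list set" where
  "rankings C = permutations_of_set C"

definition pos :: "'c list \<Rightarrow> 'c \<Rightarrow> nat" where
  "pos t alpha = Suc (LEAST i. i < length t \<and> t ! i = alpha)"

definition sigma :: "(nat \<Rightarrow> real) \<Rightarrow> 'c list \<Rightarrow> 'c \<Rightarrow> real" where
  "sigma w t alpha = w (pos t alpha)"

definition score :: "'c set \<Rightarrow> (nat \<Rightarrow> real) \<Rightarrow> ('c list \<Rightarrow> nat) \<Rightarrow> 'c \<Rightarrow> real" where
  "score C w N alpha = (\<Sum>t\<in>rankings C. real (N t) * sigma w t alpha)"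

definition T_first :: "'c set \<Rightarrow> 'c \<Rightarrow> 'c list set" where
  "T_first C b = {t \<in> rankings C. pos t b = 1}"

definition T_pair :: "'c set \<Rightarrow> 'c \<Rightarrow> 'c \<Rightarrow> nat \<Rightarrow> 'c list set" where
  "T_pair C b a i = {t \<in> rankings C. pos t b = i \<and> pos t a = i + 1}"

definition T_ba :: "'c set \<Rightarrow> 'c \<Rightarrow> 'c \<Rightarrow> 'c list set" where
  "T_ba C b a = (\<Union>i\<in>{1..card C - 1}. T_pair C b a i)"

text \<open>Optimal value (in the extended reals, +infinity if infeasible) of the first LP.\<close>
definition LP1_value :: "'c set \<Rightarrow> (nat \<Rightarrow> real) \<Rightarrow> ('c list \<Rightarrow> nat) \<Rightarrow> 'c \<Rightarrow> 'c \<Rightarrow> ereal" where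
  "LP1_value C w N a b = Inf { ereal (\<Sum>t\<in>T_ba C b a. x t) | x y.
      (\<forall>alpha\<in>C. alpha \<noteq> b \<longrightarrow>
         (\<Sum>t\<in>T_first C b. y t * (1 - sigma w t alpha))
         - (\<Sum>t\<in>T_ba C b a. x t * (sigma w t b - sigma w t alpha))
         \<ge> score C w N alpha - score C w N b) \<and>
      (\<Sum>t\<in>T_first C b. y t) = (\<Sum>t\<in>T_ba C b a. x t) \<and>
      (\<forall>t\<in>T_ba C b a. x t \<ge> 0) \<and> (\<forall>t\<in>T_first C b. y t \<ge> 0) }"

definition LP2_value :: "'c set \<Rightarrow> (nat \<Rightarrow> real) \<Rightarrow> ('c list \<Rightarrow> nat) \<Rightarrow> 'c \<Rightarrow> 'c \<Rightarrow> ereal" where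
  "LP2_value C w N a b = (let m = card C; n = (\<Sum>t\<in>rankings C. N t);
      wbar = (\<Sum>i=1..m. w i) / real m in
    Inf { ereal (\<Sum>i=1..m-1. z i) | z.
      (\<Sum>i=1..m-1. (1 - w i + w (i+1)) * z i) \<ge> score C w N a - score C w N b \<and>
      (\<Sum>i=1..m-1. (1 - w i) * z i) \<ge> real n * wbar - score C w N b \<and>
      (\<forall>i\<in>{1..m-1}. z i \<ge> 0) })"

end

theory Submission imports Defs begin

lemma pos_nth: "distinct t \<Longrightarrow> j < length t \<Longrightarrow> pos t (t!j) = Suc j"
  unfolding pos_def
  by (rule arg_cong[where f=Suc], rule Least_equality) (auto simp: nth_eq_iff_index_eq)

lemma pos_props: assumes "x \<in> set t"
  shows "1 \<le> pos t x" "pos t x \<le> length t" "t ! (pos t x - 1) = x"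
proof -
  have ex: "\<exists>i. i < length t \<and> t!i = x" using assms by (auto simp: in_set_conv_nth)
  have "(LEAST i. i < length t \<and> t!i = x) < length t \<and> t ! (LEAST i. i < length t \<and> t!i = x) = x"
    by (rule LeastI_ex[OF ex])
  then show "1 \<le> pos t x" "pos t x \<le> length t" "t ! (pos t x - 1) = x"
    unfolding pos_def by auto
qed

lemma pos_eq_iff: assumes "distinct t" "x \<in> set t" "y \<in> set t"
  shows "pos t x = pos t y \<longleftrightarrow> x = y"
  using pos_props[OF assms(2)] pos_props[OF assms(3)] by metis

lemma pos_eqI: "distinct t \<Longrightarrow> j < length t \<Longrightarrow> t!j = x \<Longrightarrow> pos t x = Suc j"
  using pos_nth by blast

lemma pos_map: assumes "inj f" shows "pos (map f t) (f x) = pos t x"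
  unfolding pos_def using assms
  by (intro arg_cong[where f=Suc] arg_cong[where f=Least] ext) (auto simp: inj_eq)

lemma perm_props: assumes "t \<in> permutations_of_set C" "finite C"
  shows "set t = C" "distinct t" "length t = card C"
  using assms by (auto simp: permutations_of_set_def distinct_card)

lemma sum_pos: assumes "t \<in> permutations_of_set C" "finite C"
  shows "(\<Sum>\<alpha>\<in>C. g (pos t \<alpha>)) = (\<Sum>p=1..card C. g p)"
proof -
  note P = perm_props[OF assms]
  have "(\<Sum>\<alpha>\<in>C. g (pos t \<alpha>)) = (\<Sum>\<alpha>\<in>(!) t ` {..<length t}. g (pos t \<alpha>))"
    using P(1) by (simp add: lessThan_atLeast0 nth_image)
  also have "\<dots> = (\<Sum>j<length t. g (pos t (t!j)))"
    by (rule sum.reindex_cong[where l="(!) t"]) (auto simp: inj_on_nth P(2))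
  also have "\<dots> = (\<Sum>j<length t. g (Suc j))" using P(2) by (simp add: pos_nth)
  also have "\<dots> = (\<Sum>p=1..card C. g p)" using P(3)
    by (simp add: sum.atLeast1_atMost_eq)
  finally show ?thesis .
qed


definition swp :: "'c \<Rightarrow> 'c \<Rightarrow> 'c \<Rightarrow> 'c" where
  "swp c d x = (if x = c then d else if x = d then c else x)"
lemma swp_inv[simp]: "swp c d (swp c d x) = x" by (simp add: swp_def)
lemma inj_swp: "inj (swp c d)" by (metis injI swp_inv)
lemma pos_map_swp: "pos (map (swp c d) L) x = pos L (swp c d x)"
  using pos_map[OF inj_swp, of c d L "swp c d x"] by simp

locale LPs =
  fixes C :: "'c set" and w :: "nat \<Rightarrow> real" and N :: "'c list \<Rightarrow> nat" and a b :: 'c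
  assumes fin: "finite C" and m3: "card C \<ge> 3" and w1: "w 1 = 1" and wm: "w (card C) = 0"
    and mono: "\<And>i j. 1 \<le> i \<Longrightarrow> i \<le> j \<Longrightarrow> j \<le> card C \<Longrightarrow> w j \<le> w i"
    and aC: "a \<in> C" and bC: "b \<in> C" and ba: "b \<noteq> a"
begin

abbreviation "m \<equiv> card C"
definition "W = (\<Sum>p=1..m. w p)"
abbreviation "sc \<equiv> score C w N"
abbreviation "sg \<equiv> sigma w"
abbreviation "TB \<equiv> T_first C b"
abbreviation "TBA \<equiv> T_ba C b a"
abbreviation "TP \<equiv> T_pair C b a"
definition "nn = (\<Sum>t\<in>rankings C. N t)"

lemma w_nonneg: "1 \<le> p \<Longrightarrow> p \<le> m \<Longrightarrow> 0 \<le> w p" using mono[of p m] wm by simp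
lemma w_le1: "1 \<le> p \<Longrightarrow> p \<le> m \<Longrightarrow> w p \<le> 1" using mono[of 1 p] w1 by simp

lemma rk: "t \<in> rankings C \<Longrightarrow> set t = C \<and> distinct t \<and> length t = m"
  using perm_props[OF _ fin] by (auto simp: rankings_def)

lemma pos_rng: "t \<in> rankings C \<Longrightarrow> \<alpha> \<in> C \<Longrightarrow> 1 \<le> pos t \<alpha> \<and> pos t \<alpha> \<le> m"
  using rk pos_props by metis

lemma sg_bounds: "t \<in> rankings C \<Longrightarrow> \<alpha> \<in> C \<Longrightarrow> 0 \<le> sg t \<alpha> \<and> sg t \<alpha> \<le> 1"
  using pos_rng w_nonneg w_le1 by (simp add: sigma_def)

lemma sum_sg: "t \<in> rankings C \<Longrightarrow> (\<Sum>\<alpha>\<in>C. sg t \<alpha>) = W"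
  unfolding sigma_def W_def using sum_pos[of t C w] fin by (simp add: rankings_def)

lemma sum_sg_minus: "t \<in> rankings C \<Longrightarrow> (\<Sum>\<alpha>\<in>C-{b}. sg t \<alpha>) = W - sg t b"
  using sum_sg[of t] fin bC by (simp add: sum_diff1)

lemma fin_rk: "finite (rankings C)" by (simp add: rankings_def)
lemma TP_sub: "TP i \<subseteq> rankings C" by (auto simp: T_pair_def)
lemma TB_sub: "TB \<subseteq> rankings C" by (auto simp: T_first_def)
lemma TBA_sub: "TBA \<subseteq> rankings C" by (auto simp: T_ba_def T_pair_def)
lemma fin_TP: "finite (TP i)" using TP_sub fin_rk finite_subset by blast
lemma fin_TB: "finite TB" using TB_sub fin_rk finite_subset by blast
lemma fin_TBA: "finite TBA" using TBA_sub fin_rk finite_subset by blast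

lemma sum_TBA: "(\<Sum>t\<in>TBA. f t) = (\<Sum>i=1..m-1. \<Sum>t\<in>TP i. f t)"
  unfolding T_ba_def
  apply (rule sum.UNION_disjoint)
    apply simp
   apply (simp add: fin_TP)
  apply (auto simp: T_pair_def)
  done

lemma sg_pair: "t \<in> TP i \<Longrightarrow> sg t b = w i \<and> sg t a = w (i+1)"
  by (simp add: T_pair_def sigma_def)
lemma sg_first: assumes "t \<in> TB" shows "sg t b = 1"
proof -
  have "pos t b = 1" using assms by (simp add: T_first_def)
  then show ?thesis by (simp only: sigma_def w1)
qed

lemma total_score: "(\<Sum>\<alpha>\<in>C. sc \<alpha>) = real nn * W"
proof -
  have "(\<Sum>\<alpha>\<in>C. sc \<alpha>) = (\<Sum>t\<in>rankings C. real (N t) * (\<Sum>\<alpha>\<in>C. sg t \<alpha>))"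
    unfolding score_def by (simp add: sum.swap[of _ C] sum_distrib_left)
  also have "\<dots> = (\<Sum>t\<in>rankings C. real (N t) * W)" using sum_sg by simp
  finally show ?thesis by (simp add: nn_def sum_distrib_right)
qed

lemma part1: "LP2_value C w N a b \<le> LP1_value C w N a b"
  unfolding LP1_value_def LP2_value_def Let_def
proof (rule Inf_mono)
  fix v assume "v \<in> { ereal (\<Sum>t\<in>T_ba C b a. x t) | x y.
      (\<forall>alpha\<in>C. alpha \<noteq> b \<longrightarrow>
         (\<Sum>t\<in>T_first C b. y t * (1 - sigma w t alpha))
         - (\<Sum>t\<in>T_ba C b a. x t * (sigma w t b - sigma w t alpha))
         \<ge> score C w N alpha - score C w N b) \<and>
      (\<Sum>t\<in>T_first C b. y t) = (\<Sum>t\<in>T_ba C b a. x t) \<and>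
      (\<forall>t\<in>T_ba C b a. x t \<ge> 0) \<and> (\<forall>t\<in>T_first C b. y t \<ge> 0) }"
  then obtain x y where v: "v = ereal (\<Sum>t\<in>TBA. x t)"
    and cons: "\<And>\<alpha>. \<alpha> \<in> C \<Longrightarrow> \<alpha> \<noteq> b \<Longrightarrow>
         (\<Sum>t\<in>TB. y t * (1 - sg t \<alpha>)) - (\<Sum>t\<in>TBA. x t * (sg t b - sg t \<alpha>)) \<ge> sc \<alpha> - sc b"
    and yx: "(\<Sum>t\<in>TB. y t) = (\<Sum>t\<in>TBA. x t)"
    and xpos: "\<And>t. t \<in> TBA \<Longrightarrow> x t \<ge> 0" and ypos: "\<And>t. t \<in> TB \<Longrightarrow> y t \<ge> 0"
    by blast
  define z where "z i = (\<Sum>t\<in>TP i. x t)" for i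
  have hx: "(\<Sum>t\<in>TBA. x t) = (\<Sum>i=1..m-1. z i)" unfolding z_def by (rule sum_TBA)
  have zpos: "\<forall>i\<in>{1..m-1}. z i \<ge> 0"
    unfolding z_def using xpos by (auto intro!: sum_nonneg simp: T_ba_def)
  have hxb: "(\<Sum>t\<in>TBA. x t * g (sg t b)) = (\<Sum>i=1..m-1. z i * g (w i))" for g
  proof -
    have "(\<Sum>t\<in>TBA. x t * g (sg t b)) = (\<Sum>i=1..m-1. \<Sum>t\<in>TP i. x t * g (w i))"
      unfolding sum_TBA by (intro sum.cong refl) (simp add: sg_pair)
    then show ?thesis by (simp add: z_def sum_distrib_right)
  qed
  have hxab: "(\<Sum>t\<in>TBA. x t * (sg t b - sg t a)) = (\<Sum>i=1..m-1. z i * (w i - w (i+1)))"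
  proof -
    have "(\<Sum>t\<in>TBA. x t * (sg t b - sg t a)) = (\<Sum>i=1..m-1. \<Sum>t\<in>TP i. x t * (w i - w (i+1)))"
      unfolding sum_TBA by (intro sum.cong refl) (simp add: sg_pair)
    then show ?thesis by (simp add: z_def sum_distrib_right)
  qed
  have hya: "(\<Sum>t\<in>TB. y t * (1 - sg t a)) \<le> (\<Sum>t\<in>TB. y t)"
    by (rule sum_mono) (use ypos sg_bounds[OF _ aC] TB_sub in \<open>auto simp: mult_left_le\<close>)
  have c1: "(\<Sum>i=1..m-1. (1 - w i + w (i+1)) * z i) \<ge> sc a - sc b"
  proof -
    have "(\<Sum>i=1..m-1. (1 - w i + w (i+1)) * z i) = (\<Sum>i=1..m-1. z i) - (\<Sum>i=1..m-1. z i * (w i - w (i+1)))"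
      by (simp add: sum_subtractf[symmetric] algebra_simps)
    then show ?thesis using cons[OF aC ba[symmetric]] hxab hya yx hx by linarith
  qed
  have c2: "(\<Sum>i=1..m-1. (1 - w i) * z i) \<ge> real nn * ((\<Sum>i=1..m. w i) / real m) - sc b"
  proof -
    have S: "(\<Sum>\<alpha>\<in>C-{b}. (\<Sum>t\<in>TB. y t * (1 - sg t \<alpha>)) - (\<Sum>t\<in>TBA. x t * (sg t b - sg t \<alpha>)))
          \<ge> (\<Sum>\<alpha>\<in>C-{b}. sc \<alpha> - sc b)"
      by (rule sum_mono) (use cons in auto)
    have L1: "(\<Sum>\<alpha>\<in>C-{b}. (\<Sum>t\<in>TB. y t * (1 - sg t \<alpha>))) = (\<Sum>t\<in>TB. y t * (real m - W))"
    proof -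
      have "(\<Sum>\<alpha>\<in>C-{b}. (\<Sum>t\<in>TB. y t * (1 - sg t \<alpha>))) = (\<Sum>t\<in>TB. y t * (\<Sum>\<alpha>\<in>C-{b}. (1 - sg t \<alpha>)))"
        by (simp add: sum.swap[of _ "C-{b}"] sum_distrib_left)
      also have "\<dots> = (\<Sum>t\<in>TB. y t * (real m - W))"
      proof (intro sum.cong refl)
        fix t assume t: "t \<in> TB"
        have "(\<Sum>\<alpha>\<in>C-{b}. (1 - sg t \<alpha>)) = real (m - 1) - (W - sg t b)"
          using sum_sg_minus[of t] t TB_sub fin bC by (auto simp: sum_subtractf)
        also have "\<dots> = real m - W" using sg_first[OF t] m3 by (simp add: of_nat_diff)
        finally show "y t * (\<Sum>\<alpha>\<in>C-{b}. (1 - sg t \<alpha>)) = y t * (real m - W)" by simp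
      qed
      finally show ?thesis .
    qed
    have L2: "(\<Sum>\<alpha>\<in>C-{b}. (\<Sum>t\<in>TBA. x t * (sg t b - sg t \<alpha>))) = (\<Sum>t\<in>TBA. x t * (real m * sg t b - W))"
    proof -
      have "(\<Sum>\<alpha>\<in>C-{b}. (\<Sum>t\<in>TBA. x t * (sg t b - sg t \<alpha>))) = (\<Sum>t\<in>TBA. x t * (\<Sum>\<alpha>\<in>C-{b}. (sg t b - sg t \<alpha>)))"
        by (simp add: sum.swap[of _ "C-{b}"] sum_distrib_left)
      also have "\<dots> = (\<Sum>t\<in>TBA. x t * (real m * sg t b - W))"
      proof (intro sum.cong refl)
        fix t assume t: "t \<in> TBA"
        have "(\<Sum>\<alpha>\<in>C-{b}. (sg t b - sg t \<alpha>)) = real (m - 1) * sg t b - (W - sg t b)"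
          using sum_sg_minus[of t] t TBA_sub fin bC by (auto simp: sum_subtractf)
        also have "\<dots> = real m * sg t b - W" using m3 by (simp add: of_nat_diff algebra_simps)
        finally show "x t * (\<Sum>\<alpha>\<in>C-{b}. (sg t b - sg t \<alpha>)) = x t * (real m * sg t b - W)" by simp
      qed
      finally show ?thesis .
    qed
    have L2': "(\<Sum>t\<in>TBA. x t * (real m * sg t b - W)) = real m * (\<Sum>i=1..m-1. z i * w i) - W * (\<Sum>t\<in>TBA. x t)"
    proof -
      have "(\<Sum>t\<in>TBA. x t * (real m * sg t b - W)) = real m * (\<Sum>t\<in>TBA. x t * sg t b) - W * (\<Sum>t\<in>TBA. x t)"
        by (simp add: algebra_simps sum_subtractf sum_distrib_left)
      then show ?thesis using hxb[of "\<lambda>s. s"] by simp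
    qed
    have R: "(\<Sum>\<alpha>\<in>C-{b}. sc \<alpha> - sc b) = real nn * W - real m * sc b"
    proof -
      have "(\<Sum>\<alpha>\<in>C-{b}. sc \<alpha> - sc b) = (\<Sum>\<alpha>\<in>C. sc \<alpha>) - sc b - real (m - 1) * sc b"
        using fin bC by (simp add: sum_subtractf sum_diff1)
      then show ?thesis using total_score m3 by (simp add: of_nat_diff algebra_simps)
    qed
    have "real m * (\<Sum>i=1..m-1. (1 - w i) * z i) = real m * ((\<Sum>i=1..m-1. z i) - (\<Sum>i=1..m-1. z i * w i))"
      by (simp add: sum_subtractf[symmetric] algebra_simps)
    have key: "real m * (\<Sum>i=1..m-1. (1 - w i) * z i) \<ge> real nn * W - real m * sc b"
    proof -
      have "real m * (\<Sum>i=1..m-1. (1 - w i) * z i) = real m * ((\<Sum>i=1..m-1. z i) - (\<Sum>i=1..m-1. z i * w i))"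
        by (simp add: sum_subtractf[symmetric] algebra_simps)
      also have "\<dots> = (\<Sum>t\<in>TB. y t * (real m - W)) - (\<Sum>t\<in>TBA. x t * (real m * sg t b - W))"
      proof -
        have E1: "(\<Sum>t\<in>TB. y t * (real m - W)) = (real m - W) * (\<Sum>i=1..m-1. z i)"
          using yx hx by (simp add: sum_distrib_right[symmetric] mult.commute)
        show ?thesis unfolding E1 L2' hx by (simp add: algebra_simps)
      qed
      finally show ?thesis using S L1 L2 R by (simp add: sum_subtractf)
    qed
    have mpos: "real m > 0" using m3 by simp
    show ?thesis using key mpos unfolding W_def
      by (simp add: field_simps)
  qed
  show "\<exists>u\<in>{ ereal (\<Sum>i=1..card C-1. z i) | z.
      (\<Sum>i=1..card C-1. (1 - w i + w (i+1)) * z i) \<ge> score C w N a - score C w N b \<and>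
      (\<Sum>i=1..card C-1. (1 - w i) * z i) \<ge> real (\<Sum>t\<in>rankings C. N t) * ((\<Sum>i=1..card C. w i) / real (card C)) - score C w N b \<and>
      (\<forall>i\<in>{1..card C-1}. z i \<ge> 0) }. u \<le> v"
    using c1 c2 zpos hx v unfolding nn_def by blast
qed

definition "Oth = C - {a,b}"
definition "vpos i = (if i \<le> m-2 then m else m-2)"
definition "S i \<beta> = {t \<in> TP i. t ! (vpos i - 1) = \<beta>}"
definition "pn i p = (if p < i then p+1 else if p = i then 1 else p)"
definition "sw i p = (if p = i+1 then m else if p = m then i+1 else p)"
definition "ps i p = pn i (sw i p)"
definition "un t = b # take (pos t b - 1) t @ drop (pos t b) t"
definition "us t = map (swp a (last t)) (un t)"

lemma TP_props: assumes "t \<in> TP i"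
  shows "t \<in> rankings C" "set t = C" "distinct t" "length t = m" "pos t b = i" "pos t a = Suc i"
    "t!(i-1) = b" "t!i = a" "1 \<le> i" "i < m"
proof -
  show t: "t \<in> rankings C" using assms TP_sub by blast
  show "set t = C" "distinct t" "length t = m" using rk[OF t] by auto
  show pb: "pos t b = i" and pa: "pos t a = Suc i" using assms by (auto simp: T_pair_def)
  have "b \<in> set t" "a \<in> set t" using rk[OF t] aC bC by auto
  from pos_props[OF this(1)] pos_props[OF this(2)] rk[OF t] pb pa
  show "t!(i-1) = b" "t!i = a" "1 \<le> i" "i < m" by auto
qed

lemma un_eq: assumes "t \<in> TP i" shows "t = take (i-1) t @ b # drop i t"
proof -
  note P = TP_props[OF assms]
  have "t = take (i-1) t @ t!(i-1) # drop (Suc (i-1)) t"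
    by (rule id_take_nth_drop) (use P in auto)
  then show ?thesis using P by simp
qed

lemma un_props: assumes "t \<in> TP i"
  shows "un t \<in> rankings C" "length (un t) = m"
    "\<And>j. j < m \<Longrightarrow> un t ! j = (if j = 0 then b else if j < i then t!(j-1) else t!j)"
proof -
  note P = TP_props[OF assms]
  have u: "un t = b # take (i-1) t @ drop i t" using P by (simp add: un_def)
  have eq: "t = take (i-1) t @ b # drop i t" by (rule un_eq[OF assms])
  have "set (un t) = set t" unfolding u by (subst (2) eq) auto
  moreover have "distinct (un t)" unfolding u using P(3) by (subst (asm) eq) auto
  ultimately show "un t \<in> rankings C" using P by (auto simp: rankings_def permutations_of_set_def)
  show "length (un t) = m" unfolding u using P by auto
  fix j assume j: "j < m"
  show "un t ! j = (if j = 0 then b else if j < i then t!(j-1) else t!j)"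
  proof (cases j)
    case 0 then show ?thesis by (simp add: u)
  next
    case (Suc j')
    have "un t ! j = (take (i-1) t @ drop i t) ! j'" by (simp add: u Suc)
    also have "\<dots> = (if j < i then t!(j-1) else t!j)"
      using P j Suc by (auto simp: nth_append)
    finally show ?thesis using Suc by simp
  qed
qed

lemma pos_un: assumes "t \<in> TP i" "\<gamma> \<in> C" shows "pos (un t) \<gamma> = pn i (pos t \<gamma>)"
proof -
  note P = TP_props[OF assms(1)]
  note U = un_props[OF assms(1)]
  have du: "distinct (un t)" using rk[OF U(1)] by simp
  define p where "p = pos t \<gamma>"
  have g: "\<gamma> \<in> set t" using P assms by simp
  note pp = pos_props[OF g, folded p_def]
  consider "p = i" | "p < i" | "p > i" by linarith
  then show ?thesis
  proof cases
    case 1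
    then have "\<gamma> = b" using pp P by simp
    have "m > 0" using P by simp
    then have "pos (un t) b = Suc 0" using U du by (intro pos_eqI) auto
    then show ?thesis using 1 \<open>\<gamma> = b\<close> by (simp add: pn_def p_def)
  next
    case 2
    have "un t ! p = \<gamma>" using U(3)[of p] pp 2 P by simp
    then show ?thesis using 2 pp U du P by (simp add: pn_def p_def[symmetric] pos_eqI)
  next
    case 3
    have "\<not> (p-1 < i)" "p - 1 \<noteq> 0" "p - 1 < m" using 3 pp P by linarith+
    then have "un t ! (p-1) = \<gamma>" using U(3)[of "p-1"] pp by simp
    then have "pos (un t) \<gamma> = Suc (p-1)" using pp U du P 3 by (intro pos_eqI) auto
    then show ?thesis using 3 pp by (simp add: pn_def p_def[symmetric])
  qed
qed

lemma last_props: assumes "t \<in> TP i" shows "last t \<in> C" "pos t (last t) = m"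
proof -
  note P = TP_props[OF assms]
  have "m > 0" using m3 by simp
  then have "t \<noteq> []" using P by auto
  then have l: "last t = t ! (m-1)" using P by (simp add: last_conv_nth)
  show "last t \<in> C" using P \<open>m>0\<close> l by (metis diff_less less_one nth_mem)
  show "pos t (last t) = m" using P \<open>m>0\<close> l pos_nth[of t "m-1"] by simp
qed

lemma sw_pos: assumes "t \<in> TP i" "\<gamma> \<in> C"
  shows "pos t (swp a (last t) \<gamma>) = sw i (pos t \<gamma>)" "swp a (last t) \<gamma> \<in> C"
proof -
  note P = TP_props[OF assms(1)]
  note L = last_props[OF assms(1)]
  have E: "\<And>x y. x \<in> C \<Longrightarrow> y \<in> C \<Longrightarrow> pos t x = pos t y \<longleftrightarrow> x = y"
    using pos_eq_iff[OF P(3)] P(2) by simp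
  show "swp a (last t) \<gamma> \<in> C" using L aC assms by (simp add: swp_def)
  show "pos t (swp a (last t) \<gamma>) = sw i (pos t \<gamma>)"
  proof (cases "\<gamma> = a")
    case True then show ?thesis using L P by (simp add: swp_def sw_def)
  next
    case False
    show ?thesis
    proof (cases "\<gamma> = last t")
      case True
      then have "m \<noteq> Suc i" using E[of a \<gamma>] L P aC False by auto
      then show ?thesis using True False L P by (simp add: swp_def sw_def)
    next
      case False2: False
      have "pos t \<gamma> \<noteq> Suc i" using E[of \<gamma> a] P aC assms False by auto
      moreover have "pos t \<gamma> \<noteq> m" using E[of \<gamma> "last t"] L assms False2 by auto
      ultimately show ?thesis using False False2 by (simp add: swp_def sw_def)
    qed
  qed
qed

lemma pos_us: assumes "t \<in> TP i" "\<gamma> \<in> C" shows "pos (us t) \<gamma> = ps i (pos t \<gamma>)"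
proof -
  have "pos (us t) \<gamma> = pos (un t) (swp a (last t) \<gamma>)" unfolding us_def by (rule pos_map_swp)
  also have "\<dots> = pn i (pos t (swp a (last t) \<gamma>))" by (rule pos_un[OF assms(1) sw_pos(2)[OF assms]])
  also have "\<dots> = ps i (pos t \<gamma>)" unfolding ps_def sw_pos(1)[OF assms] ..
  finally show ?thesis .
qed

lemma un_TB: assumes "t \<in> TP i" shows "un t \<in> TB"
proof -
  note P = TP_props[OF assms]
  have "pos (un t) b = 1" using pos_un[OF assms bC] P by (simp add: pn_def)
  then show ?thesis using un_props(1)[OF assms] by (simp add: T_first_def)
qed

lemma us_TB: assumes "t \<in> TP i" shows "us t \<in> TB"
proof -
  note P = TP_props[OF assms]
  note U = un_props[OF assms]
  have pb: "pos t b = i" by (rule P(5))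
  have "sw i i = i" using P(10) by (simp add: sw_def)
  then have "ps i i = 1" by (simp add: ps_def pn_def)
  then have p1: "pos (us t) b = 1" using pos_us[OF assms bC] pb by simp
  let ?f = "swp a (last t)"
  have s: "set (un t) = C" "distinct (un t)" using rk[OF U(1)] by auto
  have fC: "?f ` C = C"
  proof
    show "?f ` C \<subseteq> C" by (rule image_subsetI) (rule sw_pos(2)[OF assms])
    show "C \<subseteq> ?f ` C"
    proof
      fix x assume x: "x \<in> C"
      have "x = ?f (?f x)" by simp
      moreover have "?f x \<in> C" using x by (rule sw_pos(2)[OF assms])
      ultimately show "x \<in> ?f ` C" by (rule image_eqI)
    qed
  qed
  have "set (us t) = ?f ` set (un t)" unfolding us_def by (rule list.set_map)
  then have st: "set (us t) = C" by (simp only: fC s(1))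
  have inj: "inj_on ?f (set (un t))" by (rule inj_on_subset[OF inj_swp subset_UNIV])
  have dt: "distinct (us t)" unfolding us_def distinct_map
    using s(2) inj by (rule conjI)
  have "us t \<in> rankings C" using st dt by (simp add: rankings_def permutations_of_set_def)
  then show ?thesis using p1 by (simp add: T_first_def)
qed



definition "vic t = t ! (vpos (pos t b) - 1)"
definition "hh \<theta> i p = 1 - w i + w p - ((1-\<theta>) * w (pn i p) + \<theta> * w (ps i p))"
definition "F \<theta> i \<beta> \<gamma> = (\<Sum>t\<in>S i \<beta>. hh \<theta> i (pos t \<gamma>)) / real (card (S i \<beta>))"

lemma card_Oth: "card Oth = m - 2"
  using fin aC bC ba by (simp add: Oth_def card_Diff_subset)

lemma fin_Oth: "finite Oth" using fin by (simp add: Oth_def)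

lemma vpos_props: assumes "1 \<le> i" "i \<le> m-1"
  shows "1 \<le> vpos i" "vpos i \<le> m" "vpos i \<noteq> i" "vpos i \<noteq> Suc i"
  using assms m3 by (auto simp: vpos_def)

lemma vic_props: assumes "t \<in> TP i"
  shows "vic t \<in> Oth" "pos t (vic t) = vpos i"
proof -
  note P = TP_props[OF assms]
  have ii: "1 \<le> i" "i \<le> m-1" using P by auto
  note V = vpos_props[OF ii]
  have j: "vpos i - 1 < length t" using V P by simp
  have pv: "pos t (vic t) = vpos i" unfolding vic_def P(5) using pos_nth[OF P(3) j] V by simp
  have inC: "vic t \<in> C" unfolding vic_def P(5) using j P(2) nth_mem by blast
  have "vic t \<noteq> b" using pv P V by auto
  moreover have "vic t \<noteq> a" using pv P V by auto
  ultimately show "vic t \<in> Oth" using inC by (simp add: Oth_def)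
  show "pos t (vic t) = vpos i" by (rule pv)
qed

lemma S_sub: "S i \<beta> \<subseteq> TP i" by (auto simp: S_def)
lemma fin_S: "finite (S i \<beta>)" using fin_TP finite_subset[OF S_sub] by blast
lemma S_vic: "t \<in> S i \<beta> \<Longrightarrow> vic t = \<beta>"
  using TP_props(5)[of t i] by (auto simp: S_def vic_def)

lemma TP_split: "TP i = (\<Union>\<beta>\<in>Oth. S i \<beta>)"
proof
  show "TP i \<subseteq> (\<Union>\<beta>\<in>Oth. S i \<beta>)"
  proof
    fix t assume t: "t \<in> TP i"
    then have "t \<in> S i (vic t)" using TP_props(5)[OF t] by (simp add: S_def vic_def)
    then show "t \<in> (\<Union>\<beta>\<in>Oth. S i \<beta>)" using vic_props(1)[OF t] by blast
  qed
  show "(\<Union>\<beta>\<in>Oth. S i \<beta>) \<subseteq> TP i" using S_sub by blast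
qed

lemma S_ne: assumes "1 \<le> i" "i \<le> m-1" "\<beta> \<in> Oth" shows "S i \<beta> \<noteq> {}"
proof -
  obtain L where L: "set L = Oth - {\<beta>}" "distinct L"
    using finite_distinct_list[of "Oth - {\<beta>}"] fin_Oth by auto
  have lenL: "length L = m - 3"
    using distinct_card[OF L(2)] L(1) card_Diff_singleton[OF assms(3)] card_Oth by simp
  define M where "M = L @ [\<beta>]"
  have lenM: "length M = m - 2" using lenL m3 by (simp add: M_def)
  have setM: "set M = Oth" using L assms(3) by (auto simp: M_def)
  have dM: "distinct M" using L by (simp add: M_def)
  define t where "t = take (i-1) M @ [b, a] @ drop (i-1) M"
  have lt: "length (take (i-1) M) = i - 1" using lenM assms by simp
  have abM: "a \<notin> set M" "b \<notin> set M" using setM by (auto simp: Oth_def)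
  have st: "set t = C"
  proof -
    have "set t = set (take (i-1) M @ drop (i-1) M) \<union> {a, b}" unfolding t_def set_append by auto
    then have "set t = set M \<union> {a, b}" by (simp only: append_take_drop_id)
    then show ?thesis using setM aC bC by (auto simp: Oth_def)
  qed
  have dt: "distinct t"
  proof -
    have "distinct (take (i-1) M)" "distinct (drop (i-1) M)" using dM by auto
    then show ?thesis unfolding t_def using abM ba set_take_subset[of "i-1" M] set_drop_subset[of "i-1" M]
      set_take_disj_set_drop_if_distinct[OF dM, of "i-1" "i-1"]
      by (auto simp: distinct_append)
  qed
  have len: "length t = m" using lenM assms m3 by (simp add: t_def)
  have tr: "t \<in> rankings C" using st dt by (simp add: rankings_def permutations_of_set_def)
  have tb: "t ! (i-1) = b" unfolding t_def using lt by (simp add: nth_append)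
  have ta: "t ! i = a"
  proof -
    have "t ! i = t ! (length (take (i-1) M) + 1)" using lt assms by simp
    also have "\<dots> = ([b, a] @ drop (i-1) M) ! 1" unfolding t_def by (rule nth_append_length_plus)
    finally show ?thesis by simp
  qed
  have pb: "pos t b = i" using pos_eqI[OF dt, of "i-1" b] tb len assms by simp
  have pa: "pos t a = Suc i" using pos_eqI[OF dt, of i a] ta len assms by simp
  have tv: "t ! (vpos i - 1) = \<beta>"
  proof (cases "i \<le> m - 2")
    case True
    then have v: "vpos i - 1 = m - 1" by (simp add: vpos_def)
    have dne: "drop (i-1) M \<noteq> []" using lenM True assms by simp
    have "last t = last (drop (i-1) M)" unfolding t_def using dne by simp
    also have "\<dots> = last M" using dne by simp
    also have "\<dots> = \<beta>" by (simp add: M_def)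
    finally have "last t = \<beta>" .
    moreover have "t \<noteq> []" using len m3 by auto
    ultimately show ?thesis using v len by (simp add: last_conv_nth)
  next
    case False
    then have ie: "i - 1 = length M" using lenM assms by simp
    have v: "vpos i - 1 = length L" using False lenL m3 by (simp add: vpos_def)
    have "t = M @ [b, a]" unfolding t_def using ie by simp
    then show ?thesis using v by (simp add: M_def nth_append)
  qed
  have "t \<in> S i \<beta>" using tr pb pa tv by (simp add: S_def T_pair_def)
  then show ?thesis by blast
qed

lemma card_S_pos: "1 \<le> i \<Longrightarrow> i \<le> m-1 \<Longrightarrow> \<beta> \<in> Oth \<Longrightarrow> real (card (S i \<beta>)) > 0"
  using S_ne fin_S by (simp add: card_gt_0_iff)

lemma F_const: assumes "1 \<le> i" "i \<le> m-1" "\<beta> \<in> Oth" "\<And>t. t \<in> S i \<beta> \<Longrightarrow> hh \<theta> i (pos t \<gamma>) = c"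
  shows "F \<theta> i \<beta> \<gamma> = c"
proof -
  have "F \<theta> i \<beta> \<gamma> = (\<Sum>t\<in>S i \<beta>. c) / real (card (S i \<beta>))" unfolding F_def using assms(4) by simp
  then show ?thesis using card_S_pos[OF assms(1-3)] by simp
qed

lemma hh_a: assumes "1 \<le> i" "i \<le> m-1" shows "hh \<theta> i (Suc i) = 1 - w i + \<theta> * w (Suc i)"
proof -
  have "\<not> m < i" "m \<noteq> i" using assms m3 by auto
  then show ?thesis using wm by (simp add: hh_def pn_def ps_def sw_def algebra_simps)
qed

lemma hh_i: "1 \<le> i \<Longrightarrow> i \<le> m-1 \<Longrightarrow> hh \<theta> i i = 0"
  using w1 m3 by (simp add: hh_def pn_def ps_def sw_def algebra_simps)

lemma hh_nonneg: assumes "1 \<le> i" "i \<le> m-1" "1 \<le> p" "p \<le> m" "p \<noteq> i" "p \<noteq> Suc i" "p \<noteq> vpos i"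
  shows "hh \<theta> i p \<ge> 0"
proof (cases "p < i")
  case True
  then have "pn i p = Suc p" "ps i p = Suc p" using assms by (auto simp: pn_def ps_def sw_def)
  then have "hh \<theta> i p = 1 - w i + w p - w (Suc p)" by (simp add: hh_def algebra_simps)
  moreover have "w (Suc p) \<le> w p" using mono[of p "Suc p"] assms True by simp
  moreover have "w i \<le> 1" using w_le1 assms by simp
  ultimately show ?thesis by simp
next
  case False
  then have "p > Suc i" using assms by simp
  moreover have "p \<noteq> m" using assms \<open>p > Suc i\<close> by (auto simp: vpos_def split: if_splits)
  ultimately have "pn i p = p" "ps i p = p" using assms by (auto simp: pn_def ps_def sw_def)
  then have "hh \<theta> i p = 1 - w i" by (simp add: hh_def algebra_simps)
  then show ?thesis using w_le1 assms by simp
qed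

lemma S_props: assumes "t \<in> S i \<beta>"
  shows "t \<in> TP i" "pos t b = i" "pos t a = Suc i" "pos t \<beta> = vpos i"
proof -
  show t: "t \<in> TP i" using assms S_sub by blast
  show "pos t b = i" "pos t a = Suc i" using TP_props[OF t] by auto
  show "pos t \<beta> = vpos i" using vic_props(2)[OF t] S_vic[OF assms] by simp
qed

lemma F_a: "1 \<le> i \<Longrightarrow> i \<le> m-1 \<Longrightarrow> \<beta> \<in> Oth \<Longrightarrow> F \<theta> i \<beta> a = 1 - w i + \<theta> * w (Suc i)"
  by (rule F_const) (auto simp: S_props hh_a)

lemma F_v: "1 \<le> i \<Longrightarrow> i \<le> m-1 \<Longrightarrow> \<beta> \<in> Oth \<Longrightarrow> F \<theta> i \<beta> \<beta> = hh \<theta> i (vpos i)"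
  by (rule F_const) (auto simp: S_props)

lemma map_swp_S: assumes "t \<in> S i \<beta>" "\<gamma> \<in> Oth - {\<beta>}" "\<gamma>' \<in> Oth - {\<beta>}"
  shows "map (swp \<gamma> \<gamma>') t \<in> S i \<beta>"
proof -
  let ?f = "swp \<gamma> \<gamma>'"
  note SP = S_props[OF assms(1)]
  note P = TP_props[OF SP(1)]
  have gC: "\<gamma> \<in> C" "\<gamma>' \<in> C" using assms by (auto simp: Oth_def)
  have fb: "?f b = b" "?f a = a" "?f \<beta> = \<beta>" using assms by (auto simp: swp_def Oth_def)
  have fC: "?f ` C = C"
  proof
    show "?f ` C \<subseteq> C" using gC by (auto simp: swp_def)
    show "C \<subseteq> ?f ` C"
    proof
      fix x assume x: "x \<in> C"
      have "x = ?f (?f x)" by simp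
      moreover have "?f x \<in> C" using x gC by (simp add: swp_def)
      ultimately show "x \<in> ?f ` C" by (rule image_eqI)
    qed
  qed
  have st: "set (map ?f t) = C" using P(2) fC by simp
  have inj: "inj_on ?f (set t)" by (rule inj_on_subset[OF inj_swp subset_UNIV])
  have dt: "distinct (map ?f t)" unfolding distinct_map using P(3) inj by (rule conjI)
  have r: "map ?f t \<in> rankings C" using st dt by (simp add: rankings_def permutations_of_set_def)
  have pb: "pos (map ?f t) b = i" using pos_map_swp[of \<gamma> \<gamma>' t b] fb SP by simp
  have pa: "pos (map ?f t) a = Suc i" using pos_map_swp[of \<gamma> \<gamma>' t a] fb SP by simp
  have ii: "1 \<le> i" "i \<le> m-1" using P by auto
  have j: "vpos i - 1 < length t" using vpos_props[OF ii] P by simp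
  have "t ! (vpos i - 1) = \<beta>" using assms(1) by (simp add: S_def)
  then have "map ?f t ! (vpos i - 1) = \<beta>" using j fb by simp
  then show ?thesis using r pb pa by (simp add: S_def T_pair_def)
qed

lemma F_sym: assumes "\<gamma> \<in> Oth - {\<beta>}" "\<gamma>' \<in> Oth - {\<beta>}"
  shows "F \<theta> i \<beta> \<gamma> = F \<theta> i \<beta> \<gamma>'"
proof -
  let ?f = "swp \<gamma> \<gamma>'"
  have "(\<Sum>t\<in>S i \<beta>. hh \<theta> i (pos t \<gamma>)) = (\<Sum>t\<in>S i \<beta>. hh \<theta> i (pos (map ?f t) \<gamma>))"
    by (rule sum.reindex_bij_witness[where i="map ?f" and j="map ?f"])
      (auto simp: map_swp_S[OF _ assms] comp_def)
  also have "\<dots> = (\<Sum>t\<in>S i \<beta>. hh \<theta> i (pos t \<gamma>'))"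
    by (simp add: pos_map_swp swp_def)
  finally show ?thesis unfolding F_def by simp
qed

lemma sum_hh: assumes "t \<in> TP i" shows "(\<Sum>\<gamma>\<in>C. hh \<theta> i (pos t \<gamma>)) = real m * (1 - w i)"
proof -
  have r1: "un t \<in> rankings C" using un_TB[OF assms] TB_sub by blast
  have r2: "us t \<in> rankings C" using us_TB[OF assms] TB_sub by blast
  have r0: "t \<in> rankings C" using TP_props[OF assms] by simp
  have s0: "(\<Sum>\<gamma>\<in>C. w (pos t \<gamma>)) = W" using sum_pos[of t C w] r0 fin by (simp add: rankings_def W_def)
  have "(\<Sum>\<gamma>\<in>C. w (pn i (pos t \<gamma>))) = (\<Sum>\<gamma>\<in>C. w (pos (un t) \<gamma>))" using pos_un[OF assms] by simp
  also have "\<dots> = W" using sum_pos[of "un t" C w] r1 fin by (simp add: rankings_def W_def)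
  finally have s1: "(\<Sum>\<gamma>\<in>C. w (pn i (pos t \<gamma>))) = W" .
  have "(\<Sum>\<gamma>\<in>C. w (ps i (pos t \<gamma>))) = (\<Sum>\<gamma>\<in>C. w (pos (us t) \<gamma>))" using pos_us[OF assms] by simp
  also have "\<dots> = W" using sum_pos[of "us t" C w] r2 fin by (simp add: rankings_def W_def)
  finally have s2: "(\<Sum>\<gamma>\<in>C. w (ps i (pos t \<gamma>))) = W" .
  have "(\<Sum>\<gamma>\<in>C. hh \<theta> i (pos t \<gamma>)) = (\<Sum>\<gamma>\<in>C. (1 - w i)) + (\<Sum>\<gamma>\<in>C. w (pos t \<gamma>))
      - ((1-\<theta>) * (\<Sum>\<gamma>\<in>C. w (pn i (pos t \<gamma>))) + \<theta> * (\<Sum>\<gamma>\<in>C. w (ps i (pos t \<gamma>))))"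
    by (simp add: hh_def sum.distrib sum_subtractf sum_distrib_left)
  also have "\<dots> = real m * (1 - w i)" unfolding s0 s1 s2 by (simp add: algebra_simps)
  finally show ?thesis .
qed

lemma F_sum: assumes "1 \<le> i" "i \<le> m-1" "\<beta> \<in> Oth"
  shows "(\<Sum>\<gamma>\<in>Oth. F \<theta> i \<beta> \<gamma>) = real m * (1 - w i) - (1 - w i + \<theta> * w (Suc i))"
proof -
  have per: "(\<Sum>\<gamma>\<in>Oth. hh \<theta> i (pos t \<gamma>)) = real m * (1 - w i) - (1 - w i + \<theta> * w (Suc i))"
    if t: "t \<in> S i \<beta>" for t
  proof -
    note SP = S_props[OF t]
    have "(\<Sum>\<gamma>\<in>C. hh \<theta> i (pos t \<gamma>)) = (\<Sum>\<gamma>\<in>Oth. hh \<theta> i (pos t \<gamma>)) + (\<Sum>\<gamma>\<in>{a,b}. hh \<theta> i (pos t \<gamma>))"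
      unfolding Oth_def using fin aC bC by (intro sum.subset_diff) auto
    also have "(\<Sum>\<gamma>\<in>{a,b}. hh \<theta> i (pos t \<gamma>)) = 1 - w i + \<theta> * w (Suc i)"
      using ba SP assms hh_a hh_i by simp
    finally show ?thesis using sum_hh[OF SP(1)] by simp
  qed
  have "(\<Sum>\<gamma>\<in>Oth. F \<theta> i \<beta> \<gamma>) = (\<Sum>t\<in>S i \<beta>. \<Sum>\<gamma>\<in>Oth. hh \<theta> i (pos t \<gamma>)) / real (card (S i \<beta>))"
    unfolding F_def by (simp add: sum_divide_distrib[symmetric] sum.swap[of _ Oth])
  also have "\<dots> = (\<Sum>t\<in>S i \<beta>. real m * (1 - w i) - (1 - w i + \<theta> * w (Suc i))) / real (card (S i \<beta>))"
    using per by simp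
  also have "\<dots> = real m * (1 - w i) - (1 - w i + \<theta> * w (Suc i))"
    using card_S_pos[OF assms] by simp
  finally show ?thesis .
qed

lemma F_nonneg: assumes "1 \<le> i" "i \<le> m-1" "\<gamma> \<in> Oth - {\<beta>}"
  shows "F \<theta> i \<beta> \<gamma> \<ge> 0"
  unfolding F_def
proof (intro divide_nonneg_nonneg sum_nonneg)
  fix t assume t: "t \<in> S i \<beta>"
  note SP = S_props[OF t]
  note P = TP_props[OF SP(1)]
  have g: "\<gamma> \<in> C" "\<gamma> \<noteq> a" "\<gamma> \<noteq> b" "\<gamma> \<noteq> \<beta>" using assms by (auto simp: Oth_def)
  have \<beta>C: "\<beta> \<in> C" using vic_props(1)[OF SP(1)] S_vic[OF t] by (simp add: Oth_def)
  have E: "\<And>x y. x \<in> C \<Longrightarrow> y \<in> C \<Longrightarrow> pos t x = pos t y \<longleftrightarrow> x = y"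
    using pos_eq_iff[OF P(3)] P(2) by simp
  have "pos t \<gamma> \<noteq> i" using E[of \<gamma> b] g bC SP by auto
  moreover have "pos t \<gamma> \<noteq> Suc i" using E[of \<gamma> a] g aC SP by auto
  moreover have "pos t \<gamma> \<noteq> vpos i" using E[of \<gamma> \<beta>] g \<beta>C SP by auto
  moreover have "1 \<le> pos t \<gamma>" "pos t \<gamma> \<le> m" using pos_rng[OF P(1) g(1)] by auto
  ultimately show "hh \<theta> i (pos t \<gamma>) \<ge> 0" using hh_nonneg assms by simp
qed simp



definition "xx z lam t = (if t \<in> TBA then z (pos t b) * lam (vic t) / real (card (S (pos t b) (vic t))) else 0)"
definition "yy z lam \<theta> u = (\<Sum>t\<in>TBA. xx z lam t * ((1-\<theta>) * (if un t = u then 1 else 0) + \<theta> * (if us t = u then 1 else 0)))"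

lemma TBA_TP: "t \<in> TBA \<Longrightarrow> t \<in> TP (pos t b) \<and> 1 \<le> pos t b \<and> pos t b \<le> m-1"
  by (auto simp: T_ba_def T_pair_def)

lemma sumX: "(\<Sum>t\<in>TBA. xx z lam t * g t) =
   (\<Sum>i=1..m-1. \<Sum>\<beta>\<in>Oth. z i * lam \<beta> * ((\<Sum>t\<in>S i \<beta>. g t) / real (card (S i \<beta>))))"
proof -
  have "(\<Sum>t\<in>TBA. xx z lam t * g t) = (\<Sum>i=1..m-1. \<Sum>t\<in>TP i. xx z lam t * g t)" by (rule sum_TBA)
  also have "\<dots> = (\<Sum>i=1..m-1. \<Sum>\<beta>\<in>Oth. z i * lam \<beta> * ((\<Sum>t\<in>S i \<beta>. g t) / real (card (S i \<beta>))))"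
  proof (rule sum.cong[OF refl])
    fix i assume i: "i \<in> {1..m-1}"
    have "(\<Sum>t\<in>TP i. xx z lam t * g t) = (\<Sum>\<beta>\<in>Oth. \<Sum>t\<in>S i \<beta>. xx z lam t * g t)"
      unfolding TP_split[of i]
    proof (rule sum.UNION_disjoint)
      show "finite Oth" by (rule fin_Oth)
      show "\<forall>\<beta>\<in>Oth. finite (S i \<beta>)" using fin_S by blast
      show "\<forall>\<beta>\<in>Oth. \<forall>\<gamma>\<in>Oth. \<beta> \<noteq> \<gamma> \<longrightarrow> S i \<beta> \<inter> S i \<gamma> = {}" by (auto simp: S_def)
    qed
    also have "\<dots> = (\<Sum>\<beta>\<in>Oth. z i * lam \<beta> * ((\<Sum>t\<in>S i \<beta>. g t) / real (card (S i \<beta>))))"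
    proof (rule sum.cong[OF refl])
      fix \<beta> assume \<beta>: "\<beta> \<in> Oth"
      have "(\<Sum>t\<in>S i \<beta>. xx z lam t * g t) = (\<Sum>t\<in>S i \<beta>. (z i * lam \<beta> / real (card (S i \<beta>))) * g t)"
      proof (rule sum.cong[OF refl])
        fix t assume t: "t \<in> S i \<beta>"
        note SP = S_props[OF t]
        have "t \<in> TBA" using SP(1) i by (auto simp: T_ba_def)
        then show "xx z lam t * g t = (z i * lam \<beta> / real (card (S i \<beta>))) * g t"
          using SP S_vic[OF t] by (simp add: xx_def)
      qed
      also have "\<dots> = z i * lam \<beta> * ((\<Sum>t\<in>S i \<beta>. g t) / real (card (S i \<beta>)))"
        by (simp add: sum_divide_distrib[symmetric] sum_distrib_left[symmetric])
      finally show "(\<Sum>t\<in>S i \<beta>. xx z lam t * g t) = z i * lam \<beta> * ((\<Sum>t\<in>S i \<beta>. g t) / real (card (S i \<beta>)))" .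
    qed
    finally show "(\<Sum>t\<in>TP i. xx z lam t * g t) = (\<Sum>\<beta>\<in>Oth. z i * lam \<beta> * ((\<Sum>t\<in>S i \<beta>. g t) / real (card (S i \<beta>))))" .
  qed
  finally show ?thesis .
qed

lemma pushY: "(\<Sum>u\<in>TB. yy z lam \<theta> u * f u) = (\<Sum>t\<in>TBA. xx z lam t * ((1-\<theta>) * f (un t) + \<theta> * f (us t)))"
proof -
  have "(\<Sum>u\<in>TB. yy z lam \<theta> u * f u) =
     (\<Sum>u\<in>TB. \<Sum>t\<in>TBA. xx z lam t * ((1-\<theta>) * (if un t = u then 1 else 0) + \<theta> * (if us t = u then 1 else 0)) * f u)"
    unfolding yy_def sum_distrib_right ..
  also have "\<dots> = (\<Sum>t\<in>TBA. \<Sum>u\<in>TB. xx z lam t * ((1-\<theta>) * (if un t = u then 1 else 0) + \<theta> * (if us t = u then 1 else 0)) * f u)"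
    by (rule sum.swap)
  also have "\<dots> = (\<Sum>t\<in>TBA. xx z lam t * ((1-\<theta>) * f (un t) + \<theta> * f (us t)))"
  proof (rule sum.cong[OF refl])
    fix t assume t: "t \<in> TBA"
    have m1: "un t \<in> TB" "us t \<in> TB" using TBA_TP[OF t] un_TB us_TB by blast+
    have pw: "xx z lam t * ((1-\<theta>) * (if un t = u then 1 else 0) + \<theta> * (if us t = u then 1 else 0)) * f u
       = xx z lam t * (1-\<theta>) * (if un t = u then f u else 0) + xx z lam t * \<theta> * (if us t = u then f u else 0)" for u
      by (simp add: algebra_simps)
    have "(\<Sum>u\<in>TB. xx z lam t * ((1-\<theta>) * (if un t = u then 1 else 0) + \<theta> * (if us t = u then 1 else 0)) * f u)
      = xx z lam t * (1-\<theta>) * (\<Sum>u\<in>TB. (if un t = u then f u else 0)) + xx z lam t * \<theta> * (\<Sum>u\<in>TB. (if us t = u then f u else 0))"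
      unfolding pw sum.distrib sum_distrib_left ..
    also have "\<dots> = xx z lam t * ((1-\<theta>) * f (un t) + \<theta> * f (us t))"
      using m1 fin_TB by (simp add: sum.delta algebra_simps)
    finally show "(\<Sum>u\<in>TB. xx z lam t * ((1-\<theta>) * (if un t = u then 1 else 0) + \<theta> * (if us t = u then 1 else 0)) * f u)
      = xx z lam t * ((1-\<theta>) * f (un t) + \<theta> * f (us t))" .
  qed
  finally show ?thesis .
qed

lemma LHS: assumes "\<gamma> \<in> C"
  shows "(\<Sum>u\<in>TB. yy z lam \<theta> u * (1 - sg u \<gamma>)) - (\<Sum>t\<in>TBA. xx z lam t * (sg t b - sg t \<gamma>))
     = (\<Sum>i=1..m-1. \<Sum>\<beta>\<in>Oth. z i * lam \<beta> * F \<theta> i \<beta> \<gamma>)"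
proof -
  have "(\<Sum>u\<in>TB. yy z lam \<theta> u * (1 - sg u \<gamma>)) - (\<Sum>t\<in>TBA. xx z lam t * (sg t b - sg t \<gamma>))
     = (\<Sum>t\<in>TBA. xx z lam t * ((1-\<theta>) * (1 - sg (un t) \<gamma>) + \<theta> * (1 - sg (us t) \<gamma>)) - xx z lam t * (sg t b - sg t \<gamma>))"
    unfolding pushY sum_subtractf ..
  also have "\<dots> = (\<Sum>t\<in>TBA. xx z lam t * hh \<theta> (pos t b) (pos t \<gamma>))"
  proof (rule sum.cong[OF refl])
    fix t assume t: "t \<in> TBA"
    define i where "i = pos t b"
    have tp: "t \<in> TP i" using TBA_TP[OF t] by (simp add: i_def)
    have "sg (un t) \<gamma> = w (pn i (pos t \<gamma>))" "sg (us t) \<gamma> = w (ps i (pos t \<gamma>))" "sg t b = w i"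
      using pos_un[OF tp assms] pos_us[OF tp assms] by (auto simp: sigma_def i_def)
    then show "xx z lam t * ((1-\<theta>) * (1 - sg (un t) \<gamma>) + \<theta> * (1 - sg (us t) \<gamma>)) - xx z lam t * (sg t b - sg t \<gamma>)
        = xx z lam t * hh \<theta> (pos t b) (pos t \<gamma>)"
      by (simp add: hh_def sigma_def i_def[symmetric] algebra_simps)
  qed
  also have "\<dots> = (\<Sum>i=1..m-1. \<Sum>\<beta>\<in>Oth. z i * lam \<beta> * ((\<Sum>t\<in>S i \<beta>. hh \<theta> (pos t b) (pos t \<gamma>)) / real (card (S i \<beta>))))"
    by (rule sumX)
  also have "\<dots> = (\<Sum>i=1..m-1. \<Sum>\<beta>\<in>Oth. z i * lam \<beta> * F \<theta> i \<beta> \<gamma>)"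
    unfolding F_def by (intro sum.cong refl) (simp add: S_props)
  finally show ?thesis .
qed

lemma sum_xx: assumes "sum lam Oth = 1" shows "(\<Sum>t\<in>TBA. xx z lam t) = (\<Sum>i=1..m-1. z i)"
proof -
  have "(\<Sum>t\<in>TBA. xx z lam t) = (\<Sum>t\<in>TBA. xx z lam t * 1)" by simp
  also have "\<dots> = (\<Sum>i=1..m-1. \<Sum>\<beta>\<in>Oth. z i * lam \<beta> * ((\<Sum>t\<in>S i \<beta>. 1) / real (card (S i \<beta>))))"
    by (rule sumX)
  also have "\<dots> = (\<Sum>i=1..m-1. \<Sum>\<beta>\<in>Oth. z i * lam \<beta>)"
  proof (intro sum.cong refl)
    fix i \<beta> assume "i \<in> {1..m-1}" "\<beta> \<in> Oth"
    then have "real (card (S i \<beta>)) > 0" using card_S_pos by auto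
    then show "z i * lam \<beta> * ((\<Sum>t\<in>S i \<beta>. 1) / real (card (S i \<beta>))) = z i * lam \<beta>" by simp
  qed
  also have "\<dots> = (\<Sum>i=1..m-1. z i)" using assms by (simp add: sum_distrib_left[symmetric])
  finally show ?thesis .
qed

lemma sum_yy: "(\<Sum>u\<in>TB. yy z lam \<theta> u) = (\<Sum>t\<in>TBA. xx z lam t)"
  using pushY[of z lam \<theta> "\<lambda>_. 1"] by (simp add: algebra_simps)

lemma xx_nonneg: assumes "\<forall>i\<in>{1..m-1}. z i \<ge> 0" "\<And>\<beta>. \<beta> \<in> Oth \<Longrightarrow> lam \<beta> \<ge> 0"
  shows "xx z lam t \<ge> 0"
proof (cases "t \<in> TBA")
  case True
  note T = TBA_TP[OF True]
  have "vic t \<in> Oth" using vic_props(1) T by blast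
  then show ?thesis using True T assms by (simp add: xx_def)
qed (simp add: xx_def)

lemma yy_nonneg: assumes "\<forall>i\<in>{1..m-1}. z i \<ge> 0" "\<And>\<beta>. \<beta> \<in> Oth \<Longrightarrow> lam \<beta> \<ge> 0" "0 \<le> \<theta>" "\<theta> \<le> 1"
  shows "yy z lam \<theta> u \<ge> 0"
  unfolding yy_def using xx_nonneg[OF assms(1,2)] assms(3,4)
  by (intro sum_nonneg mult_nonneg_nonneg add_nonneg_nonneg) auto

lemma final_ineq: fixes Nn Vv e Q lam :: real
  assumes "Nn \<ge> 0" "e \<ge> 0" "Q > 0" "Nn - Vv \<le> Q" "lam = (Nn + e) / Q"
  shows "lam * Vv + (1 - lam) * Nn \<ge> - e"
proof -
  have l0: "lam \<ge> 0" using assms by simp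
  have eq: "lam * Vv + (1 - lam) * Nn = Nn - lam * (Nn - Vv)" by (simp add: algebra_simps)
  show ?thesis
  proof (cases "Nn - Vv \<le> 0")
    case True
    then have "lam * (Nn - Vv) \<le> 0" using l0 by (simp add: mult_nonneg_nonpos)
    then show ?thesis using eq assms by linarith
  next
    case False
    have "lam * (Nn - Vv) \<le> lam * Q" using l0 assms(4) by (rule mult_left_mono[rotated])
    also have "\<dots> = Nn + e" using assms by simp
    finally show ?thesis using eq by linarith
  qed
qed

lemma part2:
  assumes sb: "\<And>alpha. alpha \<in> C \<Longrightarrow> alpha \<noteq> a \<Longrightarrow> sc b \<ge> sc alpha"
  shows "LP1_value C w N a b \<le> LP2_value C w N a b"
  unfolding LP1_value_def LP2_value_def Let_def
proof (rule Inf_mono)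
  fix v assume "v \<in> { ereal (\<Sum>i=1..card C-1. z i) | z.
      (\<Sum>i=1..card C-1. (1 - w i + w (i+1)) * z i) \<ge> score C w N a - score C w N b \<and>
      (\<Sum>i=1..card C-1. (1 - w i) * z i) \<ge> real (\<Sum>t\<in>rankings C. N t) * ((\<Sum>i=1..card C. w i) / real (card C)) - score C w N b \<and>
      (\<forall>i\<in>{1..card C-1}. z i \<ge> 0) }"
  then obtain z where v: "v = ereal (\<Sum>i=1..m-1. z i)"
    and c1: "(\<Sum>i=1..m-1. (1 - w i + w (i+1)) * z i) \<ge> sc a - sc b"
    and c2: "(\<Sum>i=1..m-1. (1 - w i) * z i) \<ge> real nn * (W / real m) - sc b"
    and zpos: "\<forall>i\<in>{1..m-1}. z i \<ge> 0"
    unfolding nn_def W_def by blast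
  define D where "D = sc a - sc b"
  define A where "A = (\<Sum>i=1..m-1. (1 - w i) * z i)"
  define W' where "W' = (\<Sum>i=1..m-1. w (Suc i) * z i)"
  define \<theta> where "\<theta> = (if D \<le> A then 0 else (D - A) / W')"
  define Ga where "Ga = A + \<theta> * W'"
  define e where "e \<gamma> = sc b - sc \<gamma>" for \<gamma>
  define E where "E = (\<Sum>\<gamma>\<in>Oth. e \<gamma>)"
  define k where "k = real (card Oth)"
  have epos: "\<And>\<gamma>. \<gamma> \<in> Oth \<Longrightarrow> e \<gamma> \<ge> 0" using sb by (auto simp: e_def Oth_def)
  have Epos: "E \<ge> 0" unfolding E_def using epos by (simp add: sum_nonneg)
  have k1: "k \<ge> 1" using card_Oth m3 by (simp add: k_def)
  have A_nn: "A \<ge> 0" unfolding A_def using zpos w_le1 by (intro sum_nonneg) auto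
  have c1': "A + W' \<ge> D" using c1 unfolding A_def W'_def D_def
    by (simp add: sum.distrib[symmetric] algebra_simps)
  have c2': "real m * A \<ge> D - E"
  proof -
    have mpos: "real m > 0" using m3 by simp
    have "real m * A \<ge> real nn * W - real m * sc b" using c2 mpos unfolding A_def
      by (simp add: field_simps)
    moreover have "(\<Sum>\<alpha>\<in>C. sc \<alpha>) = (\<Sum>\<gamma>\<in>Oth. sc \<gamma>) + sc a + sc b"
    proof -
      have "(\<Sum>\<alpha>\<in>C. sc \<alpha>) = (\<Sum>\<gamma>\<in>Oth. sc \<gamma>) + (\<Sum>\<gamma>\<in>{a,b}. sc \<gamma>)"
        unfolding Oth_def using fin aC bC by (intro sum.subset_diff) auto
      then show ?thesis using ba by simp
    qed
    moreover have "(\<Sum>\<gamma>\<in>Oth. sc \<gamma>) = k * sc b - E"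
      unfolding E_def e_def k_def by (simp add: sum_subtractf)
    moreover have "k = real m - 2" using card_Oth m3 by (simp add: k_def of_nat_diff)
    ultimately show ?thesis using total_score unfolding D_def by (simp add: algebra_simps)
  qed
  have th: "0 \<le> \<theta> \<and> \<theta> \<le> 1 \<and> Ga \<ge> D \<and> real m * A - Ga \<ge> - E"
  proof (cases "D \<le> A")
    case True
    then have "\<theta> = 0" "Ga = A" by (simp_all add: \<theta>_def Ga_def)
    moreover have "real m * A - A \<ge> 0"
    proof -
      have "real m \<ge> 1" using m3 by simp
      then have "real m * A \<ge> 1 * A" using A_nn by (rule mult_right_mono)
      then show ?thesis by simp
    qed
    ultimately show ?thesis using True Epos by simp
  next
    case False
    then have Wp: "W' > 0" using c1' by simp
    have t: "\<theta> = (D - A) / W'" using False by (simp add: \<theta>_def)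
    have "Ga = D" using Wp by (simp add: Ga_def t)
    moreover have "0 \<le> \<theta>" "\<theta> \<le> 1" using False Wp c1' by (simp_all add: t field_simps)
    ultimately show ?thesis using c2' by simp
  qed
  have t0: "0 \<le> \<theta>" and t1: "\<theta> \<le> 1" and GaD: "Ga \<ge> D" and GaE: "real m * A - Ga \<ge> - E" using th by auto
  define V where "V i = hh \<theta> i (vpos i)" for i
  define H where "H i = real m * (1 - w i) - (1 - w i + \<theta> * w (Suc i))" for i
  define n1 where "n1 i = (H i - V i) / (k - 1)" for i
  have Fo: "F \<theta> i \<beta> \<gamma> = n1 i" if i: "1 \<le> i" "i \<le> m-1" and bg: "\<beta> \<in> Oth" "\<gamma> \<in> Oth" "\<beta> \<noteq> \<gamma>" for i \<beta> \<gamma>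
  proof -
    have "H i = (\<Sum>\<alpha>\<in>Oth. F \<theta> i \<beta> \<alpha>)" using F_sum[OF i bg(1)] by (simp add: H_def)
    also have "\<dots> = F \<theta> i \<beta> \<beta> + (\<Sum>\<alpha>\<in>Oth-{\<beta>}. F \<theta> i \<beta> \<alpha>)"
      using fin_Oth bg by (simp add: sum.remove)
    also have "(\<Sum>\<alpha>\<in>Oth-{\<beta>}. F \<theta> i \<beta> \<alpha>) = (\<Sum>\<alpha>\<in>Oth-{\<beta>}. F \<theta> i \<beta> \<gamma>)"
      using bg by (intro sum.cong refl F_sym) auto
    also have "\<dots> = (k - 1) * F \<theta> i \<beta> \<gamma>"
    proof -
      have "card Oth > 0" using fin_Oth bg(1) by (auto simp: card_gt_0_iff)
      then have "real (card (Oth - {\<beta>})) = k - 1" using bg(1) by (simp add: k_def card_Diff_singleton of_nat_diff)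
      then show ?thesis by simp
    qed
    finally have "H i = V i + (k - 1) * F \<theta> i \<beta> \<gamma>" using F_v[OF i bg(1)] by (simp add: V_def)
    moreover have "k - 1 > 0"
    proof -
      have "{\<beta>, \<gamma>} \<subseteq> Oth" using bg by auto
      then have "card {\<beta>, \<gamma>} \<le> card Oth" using fin_Oth by (rule card_mono[rotated])
      then show ?thesis using bg by (simp add: k_def)
    qed
    ultimately show ?thesis by (simp add: n1_def field_simps)
  qed
  have Hk: "H i = V i + (k - 1) * n1 i" if i: "1 \<le> i" "i \<le> m-1" for i
  proof (cases "k = 1")
    case True
    then have "card Oth = 1" by (simp add: k_def)
    then obtain \<beta> where o: "Oth = {\<beta>}" by (auto simp: card_Suc_eq)
    have "H i = F \<theta> i \<beta> \<beta>" using F_sum[OF i, of \<beta> \<theta>] o by (simp add: H_def)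
    then show ?thesis using F_v[OF i, of \<beta> \<theta>] o True by (simp add: V_def)
  next
    case False
    then show ?thesis using k1 by (simp add: n1_def)
  qed
  have n1pos: "n1 i \<ge> 0" if i: "1 \<le> i" "i \<le> m-1" for i
  proof (cases "k = 1")
    case True then show ?thesis by (simp add: n1_def)
  next
    case False
    then have "card Oth \<ge> 2" using k1 by (simp add: k_def)
    then have "Oth \<noteq> {}" by auto
    then obtain \<beta> where b1: "\<beta> \<in> Oth" by blast
    have "card (Oth - {\<beta>}) \<ge> 1" using \<open>card Oth \<ge> 2\<close> b1 by (simp add: card_Diff_singleton)
    then have "card (Oth - {\<beta>}) > 0" by simp
    then have "Oth - {\<beta>} \<noteq> {}" using card_gt_0_iff by blast
    then obtain \<gamma> where "\<gamma> \<in> Oth - {\<beta>}" by blast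
    then have bg: "\<beta> \<in> Oth" "\<gamma> \<in> Oth" "\<beta> \<noteq> \<gamma>" using b1 by auto
    then show ?thesis using Fo[OF i bg] F_nonneg[OF i, of \<gamma> \<beta> \<theta>] by simp
  qed
  define Vv where "Vv = (\<Sum>i=1..m-1. z i * V i)"
  define Nn where "Nn = (\<Sum>i=1..m-1. z i * n1 i)"
  have Nnpos: "Nn \<ge> 0" unfolding Nn_def using zpos n1pos by (intro sum_nonneg) auto
  have T: "Vv + (k - 1) * Nn = real m * A - Ga"
  proof -
    have "Vv + (k - 1) * Nn = (\<Sum>i=1..m-1. z i * H i)"
      unfolding Vv_def Nn_def sum_distrib_left sum.distrib[symmetric]
      by (intro sum.cong refl) (simp add: Hk algebra_simps)
    also have "\<dots> = real m * A - Ga"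
      unfolding H_def Ga_def A_def W'_def
      by (simp add: algebra_simps sum.distrib sum_subtractf sum_distrib_left)
    finally show ?thesis .
  qed
  define Q where "Q = k * Nn + E"
  define lam where "lam \<gamma> = (if Q > 0 then (Nn + e \<gamma>) / Q else 1 / k)" for \<gamma>
  have lampos: "\<And>\<gamma>. \<gamma> \<in> Oth \<Longrightarrow> lam \<gamma> \<ge> 0" using epos Nnpos k1 by (simp add: lam_def)
  have lamsum: "sum lam Oth = 1"
  proof (cases "Q > 0")
    case True
    have "sum lam Oth = (\<Sum>\<gamma>\<in>Oth. Nn + e \<gamma>) / Q" using True by (simp add: lam_def sum_divide_distrib)
    also have "(\<Sum>\<gamma>\<in>Oth. Nn + e \<gamma>) = Q" by (simp add: Q_def E_def k_def sum.distrib)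
    finally show ?thesis using True by simp
  next
    case False
    then show ?thesis using k1 by (simp add: lam_def k_def)
  qed
  have LHS_o: "(\<Sum>u\<in>TB. yy z lam \<theta> u * (1 - sg u \<gamma>)) - (\<Sum>t\<in>TBA. xx z lam t * (sg t b - sg t \<gamma>))
      = lam \<gamma> * Vv + (1 - lam \<gamma>) * Nn" if g: "\<gamma> \<in> Oth" for \<gamma>
  proof -
    have gC: "\<gamma> \<in> C" using g by (simp add: Oth_def)
    have inner: "(\<Sum>\<beta>\<in>Oth. z i * lam \<beta> * F \<theta> i \<beta> \<gamma>) = z i * (lam \<gamma> * V i + (1 - lam \<gamma>) * n1 i)"
      if i: "i \<in> {1..m-1}" for i
    proof -
      have i': "1 \<le> i" "i \<le> m-1" using i by auto
      have "(\<Sum>\<beta>\<in>Oth. z i * lam \<beta> * F \<theta> i \<beta> \<gamma>) = z i * lam \<gamma> * F \<theta> i \<gamma> \<gamma> + (\<Sum>\<beta>\<in>Oth-{\<gamma>}. z i * lam \<beta> * F \<theta> i \<beta> \<gamma>)"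
        using fin_Oth g by (simp add: sum.remove)
      also have "(\<Sum>\<beta>\<in>Oth-{\<gamma>}. z i * lam \<beta> * F \<theta> i \<beta> \<gamma>) = (\<Sum>\<beta>\<in>Oth-{\<gamma>}. z i * n1 i * lam \<beta>)"
        using Fo[OF i'] g by (intro sum.cong refl) auto
      also have "\<dots> = z i * n1 i * (1 - lam \<gamma>)"
        using lamsum fin_Oth g by (simp add: sum_distrib_left[symmetric] sum_diff1)
      finally show ?thesis using F_v[OF i' g] by (simp add: V_def algebra_simps)
    qed
    have "(\<Sum>i=1..m-1. \<Sum>\<beta>\<in>Oth. z i * lam \<beta> * F \<theta> i \<beta> \<gamma>) = (\<Sum>i=1..m-1. z i * (lam \<gamma> * V i + (1 - lam \<gamma>) * n1 i))"
      by (rule sum.cong[OF refl]) (rule inner)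
    also have "\<dots> = (\<Sum>i=1..m-1. lam \<gamma> * (z i * V i) + (1 - lam \<gamma>) * (z i * n1 i))"
      by (rule sum.cong[OF refl]) (simp add: algebra_simps)
    also have "\<dots> = lam \<gamma> * Vv + (1 - lam \<gamma>) * Nn"
      unfolding sum.distrib Vv_def Nn_def sum_distrib_left ..
    finally show ?thesis unfolding LHS[OF gC] .
  qed
  have LHS_a: "(\<Sum>u\<in>TB. yy z lam \<theta> u * (1 - sg u a)) - (\<Sum>t\<in>TBA. xx z lam t * (sg t b - sg t a)) = Ga"
  proof -
    have inner: "(\<Sum>\<beta>\<in>Oth. z i * lam \<beta> * F \<theta> i \<beta> a) = z i * (1 - w i) + \<theta> * (w (Suc i) * z i)"
      if i: "i \<in> {1..m-1}" for i
    proof -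
      have i': "1 \<le> i" "i \<le> m-1" using i by auto
      have "(\<Sum>\<beta>\<in>Oth. z i * lam \<beta> * F \<theta> i \<beta> a) = (\<Sum>\<beta>\<in>Oth. z i * (1 - w i + \<theta> * w (Suc i)) * lam \<beta>)"
        using F_a[OF i'] by (intro sum.cong refl) auto
      also have "\<dots> = z i * (1 - w i + \<theta> * w (Suc i))" using lamsum by (simp add: sum_distrib_left[symmetric])
      finally show ?thesis by (simp add: algebra_simps)
    qed
    have "(\<Sum>i=1..m-1. \<Sum>\<beta>\<in>Oth. z i * lam \<beta> * F \<theta> i \<beta> a) = (\<Sum>i=1..m-1. z i * (1 - w i) + \<theta> * (w (Suc i) * z i))"
      by (rule sum.cong[OF refl]) (rule inner)
    also have "\<dots> = (\<Sum>i=1..m-1. (1 - w i) * z i) + \<theta> * (\<Sum>i=1..m-1. w (Suc i) * z i)"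
      unfolding sum.distrib sum_distrib_left by (simp add: mult.commute)
    finally show ?thesis unfolding LHS[OF aC] Ga_def A_def W'_def .
  qed
  have cons: "\<forall>alpha\<in>C. alpha \<noteq> b \<longrightarrow>
         (\<Sum>t\<in>T_first C b. yy z lam \<theta> t * (1 - sigma w t alpha))
         - (\<Sum>t\<in>T_ba C b a. xx z lam t * (sigma w t b - sigma w t alpha))
         \<ge> score C w N alpha - score C w N b"
  proof (intro ballI impI)
    fix \<alpha> assume \<alpha>: "\<alpha> \<in> C" "\<alpha> \<noteq> b"
    show "(\<Sum>t\<in>T_first C b. yy z lam \<theta> t * (1 - sigma w t \<alpha>))
         - (\<Sum>t\<in>T_ba C b a. xx z lam t * (sigma w t b - sigma w t \<alpha>))
         \<ge> score C w N \<alpha> - score C w N b"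
    proof (cases "\<alpha> = a")
      case True
      then show ?thesis using LHS_a GaD by (simp add: D_def)
    next
      case False
      then have g: "\<alpha> \<in> Oth" using \<alpha> by (simp add: Oth_def)
      have "lam \<alpha> * Vv + (1 - lam \<alpha>) * Nn \<ge> - e \<alpha>"
      proof (cases "Q > 0")
        case True
        show ?thesis
        proof (rule final_ineq[OF Nnpos epos[OF g] True])
          show "Nn - Vv \<le> Q" using T GaE by (simp add: Q_def algebra_simps)
          show "lam \<alpha> = (Nn + e \<alpha>) / Q" using True by (simp add: lam_def)
        qed
      next
        case False
        have kN: "k * Nn \<ge> 0" using Nnpos k1 by simp
        then have "k * Nn = 0" "E = 0" using False Epos unfolding Q_def by linarith+
        then have "Nn = 0" "E = 0" using k1 by simp_all
        then have e0: "e \<alpha> = 0" using sum_nonneg_eq_0_iff[OF fin_Oth, of e] epos g unfolding E_def by blast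
        have "Vv \<ge> 0" using T GaE \<open>Nn = 0\<close> \<open>E = 0\<close> by simp
        then show ?thesis using False e0 \<open>Nn = 0\<close> k1 by (simp add: lam_def)
      qed
      then show ?thesis using LHS_o[OF g] by (simp add: e_def)
    qed
  qed
  have "ereal (\<Sum>t\<in>T_ba C b a. xx z lam t) \<in> { ereal (\<Sum>t\<in>T_ba C b a. x t) | x y.
      (\<forall>alpha\<in>C. alpha \<noteq> b \<longrightarrow>
         (\<Sum>t\<in>T_first C b. y t * (1 - sigma w t alpha))
         - (\<Sum>t\<in>T_ba C b a. x t * (sigma w t b - sigma w t alpha))
         \<ge> score C w N alpha - score C w N b) \<and>
      (\<Sum>t\<in>T_first C b. y t) = (\<Sum>t\<in>T_ba C b a. x t) \<and>
      (\<forall>t\<in>T_ba C b a. x t \<ge> 0) \<and> (\<forall>t\<in>T_first C b. y t \<ge> 0) }"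
  proof -
    have P: "(\<forall>alpha\<in>C. alpha \<noteq> b \<longrightarrow>
         (\<Sum>t\<in>T_first C b. yy z lam \<theta> t * (1 - sigma w t alpha))
         - (\<Sum>t\<in>T_ba C b a. xx z lam t * (sigma w t b - sigma w t alpha))
         \<ge> score C w N alpha - score C w N b) \<and>
      (\<Sum>t\<in>T_first C b. yy z lam \<theta> t) = (\<Sum>t\<in>T_ba C b a. xx z lam t) \<and>
      (\<forall>t\<in>T_ba C b a. xx z lam t \<ge> 0) \<and> (\<forall>t\<in>T_first C b. yy z lam \<theta> t \<ge> 0)"
    proof (intro conjI)
      show "\<forall>t\<in>T_ba C b a. xx z lam t \<ge> 0" using xx_nonneg[of z lam, OF zpos lampos] by blast
      show "\<forall>t\<in>T_first C b. yy z lam \<theta> t \<ge> 0" using yy_nonneg[of z lam, OF zpos lampos t0 t1] by blast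
    qed (rule cons, rule sum_yy)
    show ?thesis unfolding mem_Collect_eq
      by (rule exI[of _ "xx z lam"], rule exI[of _ "yy z lam \<theta>"]) (rule conjI[OF refl P])
  qed
  moreover have "ereal (\<Sum>t\<in>T_ba C b a. xx z lam t) \<le> v" using sum_xx[OF lamsum] v by simp
  ultimately show "\<exists>u\<in>{ ereal (\<Sum>t\<in>T_ba C b a. x t) | x y.
      (\<forall>alpha\<in>C. alpha \<noteq> b \<longrightarrow>
         (\<Sum>t\<in>T_first C b. y t * (1 - sigma w t alpha))
         - (\<Sum>t\<in>T_ba C b a. x t * (sigma w t b - sigma w t alpha))
         \<ge> score C w N alpha - score C w N b) \<and>
      (\<Sum>t\<in>T_first C b. y t) = (\<Sum>t\<in>T_ba C b a. x t) \<and>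
      (\<forall>t\<in>T_ba C b a. x t \<ge> 0) \<and> (\<forall>t\<in>T_first C b. y t \<ge> 0) }. u \<le> v" by blast
qed

end

theorem corollary10:
  fixes C :: "'c set" and w :: "nat \<Rightarrow> real" and N :: "'c list \<Rightarrow> nat" and a b :: 'c
  assumes "finite C" and "card C \<ge> 3"
    and "w 1 = 1" and "w (card C) = 0"
    and "\<And>i j. 1 \<le> i \<Longrightarrow> i \<le> j \<Longrightarrow> j \<le> card C \<Longrightarrow> w j \<le> w i"
    and "a \<in> C" and "b \<in> C" and "b \<noteq> a"
    and "\<And>alpha. alpha \<in> C \<Longrightarrow> alpha \<noteq> a \<Longrightarrow> score C w N a > score C w N alpha"
    and "\<And>alpha. alpha \<in> C \<Longrightarrow> alpha \<noteq> a \<Longrightarrow> score C w N b \<ge> score C w N alpha"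
  shows "LP1_value C w N a b = LP2_value C w N a b"
proof -
  interpret LPs C w N a b using assms by unfold_locales auto
  show ?thesis by (rule antisym[OF part2[OF assms(10)] part1])
qed

end
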